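(* Let $(G,R,\omega)$ be a metric RPP instance and $S$ an edge-minimizing Eulerian extension for it. Then $S$ contains no edge $\{u,v\}$ such that $u$ and $v$ belong to the same connected component of $G\langle R\rangle$ and $u$ is balanced in $G\langle R\rangle$.
   Context: An RPP instance is a triple $(G,R,\omega)$, where $G=(V,E)$ is an undirected multigraph, $\omega\colon E\to\mathbb{N}$ assigns weights (parallel edges have equal weight), and $R$ is a nonempty multiset of edges of $G$. The instance is metric if $G$ contains an edge between any two vertices and the weights satisfy the triangle inequality $\omega(\{u,w\})\le\omega(\{u,v\})+\omega(\{v,w\})$ for all $u,v,w\in V$. For a multiset $X$ of edges: - $\omega(X)$ and $|X|$ are the weight and cardinality counted with multiplicity; - $V(X)$ is the set of vertices incident to edges of $X$; - $G\langle X\rangle=(V(X),X)$ is the multigraph formed by $X$ (no isolated vertices); - $\uplus$ denotes multiset sum. A vertex is balanced in a multigraph if its degree is even (a loop counts 2), and imbalanced otherwise. A multigraph without isolated vertices is Eulerian if it is connected and all vertices are balanced. An Eulerian extension for $(G,R,\omega)$ is a multiset $S$ of edges of $G$ such that $G\langle R\uplus S\rangle$ is Eulerian. It is edge-minimizing if there is no Eulerian extension $S'$ with $|S'|<|S|$ and $\omega(S')\le\omega(S)$. *)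

theory Defs
  imports Main "HOL-Library.Multiset" "HOL-Library.Uprod"
begin

text \<open>Edges are unordered pairs of vertices (loops = Upair v v).
  Edge weights are a function of the endpoints, so parallel edges have equal weight.\<close>

definition edge_weight :: "('v uprod \<Rightarrow> nat) \<Rightarrow> 'v uprod multiset \<Rightarrow> nat" where
  "edge_weight \<omega> X = sum_mset (image_mset \<omega> X)"

definition verts :: "'v uprod multiset \<Rightarrow> 'v set" where
  "verts X = (\<Union>e\<in>set_mset X. set_uprod e)"

definition deg :: "'v uprod multiset \<Rightarrow> 'v \<Rightarrow> nat" where
  "deg X v = sum_mset (image_mset (\<lambda>e. if e = Upair v v then 2 else if v \<in> set_uprod e then 1 else 0) X)"

definition balanced :: "'v uprod multiset \<Rightarrow> 'v \<Rightarrow> bool" where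
  "balanced X v \<longleftrightarrow> even (deg X v)"

definition adj :: "'v uprod multiset \<Rightarrow> ('v \<times> 'v) set" where
  "adj X = {(u, v). Upair u v \<in># X}"

definition same_comp :: "'v uprod multiset \<Rightarrow> 'v \<Rightarrow> 'v \<Rightarrow> bool" where
  "same_comp X u v \<longleftrightarrow> u \<in> verts X \<and> v \<in> verts X \<and> (u, v) \<in> (adj X)\<^sup>*"

definition connected_mg :: "'v uprod multiset \<Rightarrow> bool" where
  "connected_mg X \<longleftrightarrow> (\<forall>u\<in>verts X. \<forall>v\<in>verts X. (u, v) \<in> (adj X)\<^sup>*)"

definition eulerian :: "'v uprod multiset \<Rightarrow> bool" where
  "eulerian X \<longleftrightarrow> connected_mg X \<and> (\<forall>v\<in>verts X. balanced X v)"

definition rpp_instance :: "'v set \<Rightarrow> 'v uprod multiset \<Rightarrow> 'v uprod multiset \<Rightarrow> bool" where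
  "rpp_instance V E R \<longleftrightarrow> finite V \<and> verts E \<subseteq> V \<and> R \<noteq> {#} \<and> set_mset R \<subseteq> set_mset E"

definition metric_instance :: "'v set \<Rightarrow> 'v uprod multiset \<Rightarrow> ('v uprod \<Rightarrow> nat) \<Rightarrow> bool" where
  "metric_instance V E \<omega> \<longleftrightarrow>
     (\<forall>u\<in>V. \<forall>v\<in>V. u \<noteq> v \<longrightarrow> Upair u v \<in># E) \<and>
     (\<forall>u\<in>V. \<forall>v\<in>V. \<forall>w\<in>V. u \<noteq> v \<and> v \<noteq> w \<and> u \<noteq> w \<longrightarrow>
        \<omega> (Upair u w) \<le> \<omega> (Upair u v) + \<omega> (Upair v w))"

definition eulerian_extension :: "'v uprod multiset \<Rightarrow> 'v uprod multiset \<Rightarrow> 'v uprod multiset \<Rightarrow> bool" where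
  "eulerian_extension E R S \<longleftrightarrow> set_mset S \<subseteq> set_mset E \<and> eulerian (R + S)"

definition edge_minimizing :: "'v uprod multiset \<Rightarrow> 'v uprod multiset \<Rightarrow> ('v uprod \<Rightarrow> nat) \<Rightarrow> 'v uprod multiset \<Rightarrow> bool" where
  "edge_minimizing E R \<omega> S \<longleftrightarrow> eulerian_extension E R S \<and>
     \<not> (\<exists>S'. eulerian_extension E R S' \<and> size S' < size S \<and> edge_weight \<omega> S' \<le> edge_weight \<omega> S)"

end

theory Submission
  imports Defs
begin

lemma deg_plus[simp]: "deg (A + B) x = deg A x + deg B x"
  by (simp add: deg_def)

lemma deg_empty[simp]: "deg {#} x = 0"
  by (simp add: deg_def)

lemma deg_single: "deg {#Upair a b#} x = (if a = x \<and> b = x then 2 else if x = a \<or> x = b then 1 else 0)"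
  by (auto simp add: deg_def)

lemma deg_add_mset: "deg (add_mset e M) x = (if e = Upair x x then 2 else if x \<in> set_uprod e then 1 else 0) + deg M x"
  by (simp add: deg_def)

lemma verts_plus[simp]: "verts (A + B) = verts A \<union> verts B"
  by (auto simp add: verts_def)

lemma adj_sym: "(a, b) \<in> adj X \<Longrightarrow> (b, a) \<in> adj X"
proof -
  assume "(a, b) \<in> adj X"
  then have h: "Upair a b \<in># X" by (simp add: adj_def)
  have eq: "Upair b a = Upair a b" by simp
  have "Upair b a \<in># X" by (subst eq) (rule h)
  then show ?thesis by (simp add: adj_def)
qed

lemma rtrancl_adj_sym: "(a, b) \<in> (adj X)\<^sup>* \<Longrightarrow> (b, a) \<in> (adj X)\<^sup>*"
proof (induction rule: rtrancl_induct)
  case base then show ?case by simp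
next
  case (step y z)
  then show ?case by (meson adj_sym converse_rtrancl_into_rtrancl)
qed

lemma adj_mono: "set_mset X \<subseteq> set_mset Y \<Longrightarrow> (adj X)\<^sup>* \<subseteq> (adj Y)\<^sup>*"
  by (rule rtrancl_mono) (auto simp: adj_def)

lemma odd_sum_ex:
  assumes "odd (sum_mset (image_mset f M))"
  shows "\<exists>e\<in>#M. odd ((f e)::nat)"
  using assms
proof (induction M)
  case empty then show ?case by simp
next
  case (add x M)
  then show ?case by auto
qed

lemma in_set_uprod_ex: "u \<in> set_uprod e \<Longrightarrow> \<exists>w. e = Upair u w"
  by (cases e) auto

lemma replace:
  assumes eul: "eulerian (R+S)"
    and eq: "S' + A = S + B"
    and par: "\<forall>x. even (deg A x + deg B x)"
    and vB: "verts B \<subseteq> verts (R+S)"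
    and conA: "\<forall>a b. Upair a b \<in># A \<longrightarrow> (a,b) \<in> (adj (R+S'))\<^sup>*"
  shows "eulerian (R+S')"
proof -
  have cnt: "count S' e + count A e = count S e + count B e" for e
    using arg_cong[OF eq, of "\<lambda>M. count M e"] by simp
  have vsub: "verts (R+S') \<subseteq> verts (R+S)"
  proof
    fix x assume "x \<in> verts (R+S')"
    then consider "x \<in> verts R" | "x \<in> verts S'" by auto
    then show "x \<in> verts (R+S)"
    proof cases
      case 1 then show ?thesis by simp
    next
      case 2
      then obtain e where e: "e \<in># S'" "x \<in> set_uprod e" by (auto simp: verts_def)
      then have "e \<in># S + B" using cnt[of e] by (metis count_eq_zero_iff count_union add_is_0)
      then show ?thesis using e vB by (auto simp: verts_def)
    qed
  qed
  have adjsub: "adj (R+S) \<subseteq> (adj (R+S'))\<^sup>*"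
  proof
    fix p assume p: "p \<in> adj (R+S)"
    obtain a b where ab: "p = (a,b)" by (cases p)
    have e: "Upair a b \<in># R + S" using p ab by (simp add: adj_def)
    show "p \<in> (adj (R+S'))\<^sup>*"
    proof (cases "Upair a b \<in># R + S'")
      case True then have "(a,b) \<in> adj (R+S')" by (simp add: adj_def)
      then show ?thesis using ab by blast
    next
      case False
      then have "Upair a b \<in># S" "Upair a b \<notin># S'" using e by auto
      then have "Upair a b \<in># A" using cnt[of "Upair a b"]
        by (metis add_0 count_eq_zero_iff not_add_less1 not_gr_zero)
      then show ?thesis using conA ab by auto
    qed
  qed
  have conn: "connected_mg (R+S')"
    unfolding connected_mg_def
  proof (intro ballI)
    fix x y assume "x \<in> verts (R+S')" "y \<in> verts (R+S')"
    then have "(x,y) \<in> (adj (R+S))\<^sup>*" using vsub eul by (auto simp: eulerian_def connected_mg_def)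
    then show "(x,y) \<in> (adj (R+S'))\<^sup>*"
      using rtrancl_subset_rtrancl[OF adjsub] by auto
  qed
  have bal: "balanced (R+S') x" if x: "x \<in> verts (R+S')" for x
  proof -
    have "even (deg (R+S) x)" using x vsub eul by (auto simp: eulerian_def balanced_def)
    moreover have "deg S' x + deg A x = deg S x + deg B x"
      using arg_cong[OF eq, of "\<lambda>M. deg M x"] by simp
    moreover have "even (deg A x + deg B x)" using par by simp
    ultimately show ?thesis unfolding balanced_def deg_plus by presburger
  qed
  show ?thesis using conn bal by (simp add: eulerian_def)
qed

theorem mainTheorem5:
  fixes V :: "'v set" and E R S :: "'v uprod multiset" and \<omega> :: "'v uprod \<Rightarrow> nat"
  assumes "rpp_instance V E R"
    and "metric_instance V E \<omega>"
    and "edge_minimizing E R \<omega> S"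
  shows "\<not> (\<exists>u v. Upair u v \<in># S \<and> same_comp R u v \<and> balanced R u)"
proof
  assume "\<exists>u v. Upair u v \<in># S \<and> same_comp R u v \<and> balanced R u"
  then obtain u v where uv: "Upair u v \<in># S" and sc: "same_comp R u v" and bR: "balanced R u" by blast
  have SE: "set_mset S \<subseteq> set_mset E" and eul: "eulerian (R+S)"
    using assms(3) by (auto simp: edge_minimizing_def eulerian_extension_def)
  have nomin: "\<And>S'. set_mset S' \<subseteq> set_mset E \<Longrightarrow> eulerian (R+S') \<Longrightarrow> size S' < size S \<Longrightarrow>
      edge_weight \<omega> S' \<le> edge_weight \<omega> S \<Longrightarrow> False"
    using assms(3) by (auto simp: edge_minimizing_def eulerian_extension_def)
  have uR: "u \<in> verts R" and pth: "(u,v) \<in> (adj R)\<^sup>*" using sc by (auto simp: same_comp_def)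
  have pth2: "(v,u) \<in> (adj R)\<^sup>*" using rtrancl_adj_sym[OF pth] .
  have pR: "(u,v) \<in> (adj (R+S'))\<^sup>*" "(v,u) \<in> (adj (R+S'))\<^sup>*" for S'
    using pth pth2 adj_mono[of R "R+S'"] by auto
  have VE: "verts S \<subseteq> V" using SE assms(1) by (auto simp: rpp_instance_def verts_def)
  show False
  proof (cases "u = v")
    case True
    define S' where "S' = S - {#Upair u u#}"
    have eq: "S' + {#Upair u u#} = S + {#}" using uv True by (simp add: S'_def)
    have "eulerian (R+S')"
      by (rule replace[OF eul eq]) (auto simp: deg_single verts_def)
    moreover have "set_mset S' \<subseteq> set_mset E" using SE by (auto simp: S'_def dest: in_diffD)
    moreover have "size S' < size S" proof -
      have "S \<noteq> {#}" using uv by auto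
      then have "size S \<noteq> 0" by simp
      moreover have "size S' = size S - 1" using uv True by (simp add: S'_def size_Diff_submset)
      ultimately show ?thesis by linarith
    qed
    moreover have "edge_weight \<omega> S' \<le> edge_weight \<omega> S"
      using arg_cong[OF eq, of "edge_weight \<omega>"] by (simp add: edge_weight_def)
    ultimately show False using nomin by blast
  next
    case False
    have "even (deg (R+S) u)" using eul uR by (auto simp: eulerian_def balanced_def)
    then have evS: "even (deg S u)" using bR by (simp add: balanced_def)
    define S0 where "S0 = S - {#Upair u v#}"
    have S0S: "S = S0 + {#Upair u v#}" using uv by (simp add: S0_def)
    have "deg S u = deg S0 u + 1" using False by (subst S0S) (simp add: deg_def)
    then have "odd (deg S0 u)" using evS by simp
    then obtain e where e: "e \<in># S0"
      "odd (if e = Upair u u then 2 else if u \<in> set_uprod e then 1 else 0::nat)"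
      using odd_sum_ex unfolding deg_def by blast
    then have "e \<noteq> Upair u u" "u \<in> set_uprod e" by (auto split: if_splits)
    then obtain w where ew: "e = Upair u w" and wu: "w \<noteq> u" using in_set_uprod_ex by fastforce
    have uwS: "Upair u w \<in># S" using e ew S0S by simp
    have vS: "v \<in> verts S" and wS: "w \<in> verts S" using uv uwS unfolding verts_def by (metis UN_iff insertI1 insert_commute set_uprod_simps)+
    show False
    proof (cases "w = v")
      case True
      define A where "A = {#Upair u v, Upair u v#}"
      define S' where "S' = S - A"
      have "A \<subseteq># S" using S0S e ew True by (simp add: A_def)
      then have eq: "S' + A = S + {#}" by (simp add: S'_def)
      have "eulerian (R+S')"
      proof (rule replace[OF eul eq])
        show "\<forall>x. even (deg A x + deg {#} x)" by (simp add: A_def deg_add_mset)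
        show "verts {#} \<subseteq> verts (R + S)" by (simp add: verts_def)
        show "\<forall>a b. Upair a b \<in># A \<longrightarrow> (a, b) \<in> (adj (R + S'))\<^sup>*"
          using pR[of S'] by (auto simp: A_def)
      qed
      moreover have "set_mset S' \<subseteq> set_mset E" using SE by (auto simp: S'_def dest: in_diffD)
      moreover have "size S' < size S" using arg_cong[OF eq, of size] by (simp add: A_def)
      moreover have "edge_weight \<omega> S' \<le> edge_weight \<omega> S"
        using arg_cong[OF eq, of "edge_weight \<omega>"] by (simp add: edge_weight_def)
      ultimately show False using nomin by blast
    next
      case wv: False
      define A where "A = {#Upair u v, Upair u w#}"
      define B where "B = {#Upair v w#}"
      define S' where "S' = S - A + B"
      have "A \<subseteq># S" using S0S e ew by (simp add: A_def)
      then have eq: "S' + A = S + B" unfolding S'_def by (metis subset_mset.diff_add add.assoc add.commute)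
      have vwS': "(v,w) \<in> adj (R+S')" "(w,v) \<in> adj (R+S')" by (auto simp: S'_def B_def adj_def)
      have con: "(a,b) \<in> (adj (R+S'))\<^sup>*" if "Upair a b \<in># A" for a b
      proof -
        have uw: "(u,w) \<in> (adj (R+S'))\<^sup>*" using pR(1)[of S'] vwS'(1) by (meson rtrancl.rtrancl_into_rtrancl)
        have wu: "(w,u) \<in> (adj (R+S'))\<^sup>*" using pR(2)[of S'] vwS'(2) by (meson converse_rtrancl_into_rtrancl)
        show ?thesis using that uw wu pR[of S'] by (auto simp: A_def)
      qed
      have "eulerian (R+S')"
      proof (rule replace[OF eul eq])
        show "\<forall>x. even (deg A x + deg B x)"
        proof
          fix x
          show "even (deg A x + deg B x)"
            using False wv wu
            by (cases "x=u"; cases "x=v"; cases "x=w") (simp_all add: A_def B_def deg_add_mset deg_single)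
        qed
        show "verts B \<subseteq> verts (R + S)" using vS wS by (simp add: verts_def B_def)
        show "\<forall>a b. Upair a b \<in># A \<longrightarrow> (a, b) \<in> (adj (R + S'))\<^sup>*"
          using con by blast
      qed
      moreover have "set_mset S' \<subseteq> set_mset E"
      proof -
        have "v \<in> V" "w \<in> V" using vS wS VE by auto
        then have "Upair v w \<in># E" using assms(2) wv by (auto simp: metric_instance_def)
        then show ?thesis using SE by (auto simp: S'_def B_def dest: in_diffD)
      qed
      moreover have "size S' < size S" using arg_cong[OF eq, of size] by (simp add: A_def B_def)
      moreover have "edge_weight \<omega> S' \<le> edge_weight \<omega> S"
      proof -
        have "u \<in> verts S" using uv unfolding verts_def by (metis UN_iff insertI1 set_uprod_simps)
        then have "u \<in> V" "v \<in> V" "w \<in> V" using vS wS VE by auto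
        then have "\<omega> (Upair v w) \<le> \<omega> (Upair v u) + \<omega> (Upair u w)"
          using assms(2) False wv wu by (auto simp: metric_instance_def)
        moreover have "Upair v u = Upair u v" by simp
        ultimately show ?thesis using arg_cong[OF eq, of "edge_weight \<omega>"] by (simp add: edge_weight_def A_def B_def)
      qed
      ultimately show False using nomin by blast
    qed
  qed
qed

end
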